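(* There is no graph class $\mathcal{F}$ such that, for all graphs $G$ and $H$, any one of the following holds: (1) $G\equiv_{\mathcal{F}}H$ iff $a(G)=a(H)$, where $a$ denotes the order of the automorphism group; (2) $G\equiv_{\mathcal{F}}H$ iff $\alpha(G)=\alpha(H)$, where $\alpha$ is the size of a largest independent set; (3) $G\equiv_{\mathcal{F}}H$ iff $\omega(G)=\omega(H)$, where $\omega$ is the size of a largest clique; (4) $G\equiv_{\mathcal{F}}H$ iff $\chi(G)=\chi(H)$, where $\chi$ is the chromatic number.
   Context: All graphs are finite, undirected, without multiple edges. $\hom(F,G)$ counts homomorphisms $F\to G$; $G\equiv_{\mathcal{F}}H$ means $\hom(F,G)=\hom(F,H)$ for all $F\in\mathcal{F}$. *)

theory Defs
  imports "HOL-Library.FuncSet"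
begin

text \<open>A finite simple undirected graph: a finite vertex set together with a
  symmetric, irreflexive edge relation on it (edges stored as ordered pairs in
  both directions).\<close>

type_synonym graph = "nat set \<times> (nat \<times> nat) set"

abbreviation verts :: "graph \<Rightarrow> nat set" where "verts G \<equiv> fst G"
abbreviation edges :: "graph \<Rightarrow> (nat \<times> nat) set" where "edges G \<equiv> snd G"

definition is_graph :: "graph \<Rightarrow> bool" where
  "is_graph G \<longleftrightarrow> finite (verts G) \<and> edges G \<subseteq> verts G \<times> verts G
     \<and> sym (edges G) \<and> irrefl (edges G)"

definition homs :: "graph \<Rightarrow> graph \<Rightarrow> (nat \<Rightarrow> nat) set" where
  "homs F G = {h \<in> verts F \<rightarrow>\<^sub>E verts G.
      \<forall>u v. (u, v) \<in> edges F \<longrightarrow> (h u, h v) \<in> edges G}"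

definition hom :: "graph \<Rightarrow> graph \<Rightarrow> nat" where
  "hom F G = card (homs F G)"

definition hom_equiv :: "graph set \<Rightarrow> graph \<Rightarrow> graph \<Rightarrow> bool" where
  "hom_equiv \<F> G H \<longleftrightarrow> (\<forall>F\<in>\<F>. hom F G = hom F H)"

definition auts :: "graph \<Rightarrow> (nat \<Rightarrow> nat) set" where
  "auts G = {\<sigma> \<in> verts G \<rightarrow>\<^sub>E verts G. bij_betw \<sigma> (verts G) (verts G) \<and>
      (\<forall>u\<in>verts G. \<forall>v\<in>verts G. (u, v) \<in> edges G \<longleftrightarrow> (\<sigma> u, \<sigma> v) \<in> edges G)}"

definition aut_order :: "graph \<Rightarrow> nat" where
  "aut_order G = card (auts G)"

definition independence_number :: "graph \<Rightarrow> nat" where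
  "independence_number G = Max {card S | S. S \<subseteq> verts G \<and>
      (\<forall>u\<in>S. \<forall>v\<in>S. (u, v) \<notin> edges G)}"

definition clique_number :: "graph \<Rightarrow> nat" where
  "clique_number G = Max {card S | S. S \<subseteq> verts G \<and>
      (\<forall>u\<in>S. \<forall>v\<in>S. u \<noteq> v \<longrightarrow> (u, v) \<in> edges G)}"

definition chromatic_number :: "graph \<Rightarrow> nat" where
  "chromatic_number G = (LEAST k. \<exists>c \<in> verts G \<rightarrow> {..<k}.
      \<forall>u v. (u, v) \<in> edges G \<longrightarrow> c u \<noteq> c v)"

end

theory Submission
  imports Defs
begin

definition K1 :: graph where "K1 = ({0}, {})"
definition K2 :: graph where "K2 = ({0,1}, {(0,1),(1,0)})"
definition E2 :: graph where "E2 = ({0,1}, {})"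
definition P3 :: graph where "P3 = ({0,1,2}, {(0,1),(1,0),(1,2),(2,1)})"

lemma graphs: "is_graph K1" "is_graph K2" "is_graph E2" "is_graph P3"
  by (auto simp: is_graph_def K1_def K2_def E2_def P3_def sym_def irrefl_def)

lemma nonempty: "verts K1 \<noteq> {}" "verts K2 \<noteq> {}" "verts E2 \<noteq> {}" "verts P3 \<noteq> {}"
  by (auto simp: K1_def K2_def E2_def P3_def)

lemma cards: "card (verts K1) = 1" "card (verts K2) = 2" "card (verts E2) = 2" "card (verts P3) = 3"
  by (simp_all add: K1_def K2_def E2_def P3_def)

lemma hom_edgeless_src:
  assumes "is_graph F" "edges F = {}"
  shows "hom F G = card (verts G) ^ card (verts F)"
proof -
  have "homs F G = verts F \<rightarrow>\<^sub>E verts G" using assms(2) by (auto simp: homs_def)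
  moreover have "finite (verts F)" using assms(1) by (simp add: is_graph_def)
  ultimately show ?thesis by (simp add: hom_def card_PiE)
qed

lemma hom_edgeless_tgt:
  assumes "edges F \<noteq> {}" "edges G = {}"
  shows "hom F G = 0"
proof -
  have "homs F G = {}" using assms by (auto simp: homs_def)
  then show ?thesis by (simp add: hom_def)
qed

lemma key1:
  assumes "is_graph F" "hom F K1 \<noteq> hom F K2"
  shows "hom F K2 \<noteq> hom F P3"
proof (cases "edges F = {}")
  case True
  then have "hom F K1 = 1" "hom F K2 = 2 ^ card (verts F)" "hom F P3 = 3 ^ card (verts F)"
    using hom_edgeless_src[OF assms(1) True, of K1] hom_edgeless_src[OF assms(1) True, of K2]
      hom_edgeless_src[OF assms(1) True, of P3] cards by simp_all
  then show ?thesis using assms(2)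
  proof -
    have "card (verts F) \<noteq> 0"
    proof
      assume "card (verts F) = 0"
      then show False using assms(2) \<open>hom F K1 = 1\<close> \<open>hom F K2 = _\<close> by simp
    qed
    then have "(2::nat) ^ card (verts F) < 3 ^ card (verts F)" by (intro power_strict_mono) auto
    then show ?thesis using \<open>hom F K2 = _\<close> \<open>hom F P3 = _\<close> by simp
  qed
next
  case False
  then have "hom F K1 = 0" by (intro hom_edgeless_tgt) (auto simp: K1_def)
  then have "homs F K2 \<noteq> {}" using assms(2) by (auto simp: hom_def)
  then obtain h where h: "h \<in> homs F K2" by blast
  obtain u v where uv: "(u, v) \<in> edges F" using False by auto
  define h' where "h' = (\<lambda>x. if x \<in> verts F then (if h x = 0 then 2 else 1::nat) else undefined)"
  have hK: "h \<in> verts F \<rightarrow>\<^sub>E {0,1}" "\<And>a b. (a,b) \<in> edges F \<Longrightarrow> (h a, h b) \<in> {(0,1),(1,0)}"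
    using h by (auto simp: homs_def K2_def)
  have Fv: "edges F \<subseteq> verts F \<times> verts F" using assms(1) by (simp add: is_graph_def)
  have "h' \<in> homs F P3"
  proof -
    have "h' \<in> verts F \<rightarrow>\<^sub>E {0,1,2}" by (auto simp: h'_def split: if_splits)
    moreover have "(h' a, h' b) \<in> edges P3" if "(a,b) \<in> edges F" for a b
      using hK(2)[OF that] Fv that by (auto simp: h'_def P3_def)
    ultimately show ?thesis by (auto simp: homs_def P3_def)
  qed
  moreover have "h' \<notin> homs F K2"
  proof
    assume "h' \<in> homs F K2"
    then have "(h' u, h' v) \<in> {(0,1),(1,0)}" using uv by (auto simp: homs_def K2_def)
    then show False using hK(2)[OF uv] Fv uv by (auto simp: h'_def)
  qed
  moreover have "homs F K2 \<subseteq> homs F P3"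
  proof
    fix g assume g: "g \<in> homs F K2"
    then have "g \<in> verts F \<rightarrow>\<^sub>E verts P3" by (auto simp: homs_def K2_def P3_def PiE_iff)
    moreover have "\<forall>a b. (a, b) \<in> edges F \<longrightarrow> (g a, g b) \<in> edges P3"
    proof (intro allI impI)
      fix a b assume "(a, b) \<in> edges F"
      then have "(g a, g b) \<in> edges K2" using g by (simp add: homs_def)
      then show "(g a, g b) \<in> edges P3" unfolding K2_def P3_def by auto
    qed
    ultimately show "g \<in> homs F P3" by (simp add: homs_def)
  qed
  moreover have "finite (homs F P3)"
  proof -
    have "finite (verts F \<rightarrow>\<^sub>E verts P3)" using assms(1)
      by (intro finite_PiE) (auto simp: is_graph_def P3_def)
    then show ?thesis by (rule rev_finite_subset) (auto simp: homs_def)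
  qed
  ultimately have "card (homs F K2) < card (homs F P3)"
    by (intro psubset_card_mono) auto
  then show ?thesis by (simp add: hom_def)
qed

lemma key2:
  assumes "is_graph F" "hom F E2 \<noteq> hom F K1"
  shows "hom F K1 \<noteq> hom F K2"
proof (cases "edges F = {}")
  case True
  then have "hom F K1 = 1" "hom F K2 = 2 ^ card (verts F)" "hom F E2 = 2 ^ card (verts F)"
    using hom_edgeless_src[OF assms(1) True, of K1] hom_edgeless_src[OF assms(1) True, of K2]
      hom_edgeless_src[OF assms(1) True, of E2] cards by simp_all
  then show ?thesis using assms(2)
    by (metis less_not_refl one_less_power one_less_numeral_iff power_0 semiring_norm(76) gr0I)
next
  case False
  then have "hom F K1 = 0" "hom F E2 = 0" by (auto intro!: hom_edgeless_tgt simp: K1_def E2_def)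
  then show ?thesis using assms(2) by simp
qed


lemma Max_card_eq:
  assumes "finite V" "T \<subseteq> V" "P T" "card T = k"
    "\<And>S. S \<subseteq> V \<Longrightarrow> P S \<Longrightarrow> card S \<le> k"
  shows "Max {card S | S. S \<subseteq> V \<and> P S} = k"
proof (rule Max_eqI)
  have "{card S | S. S \<subseteq> V \<and> P S} \<subseteq> card ` Pow V" by auto
  then show "finite {card S | S. S \<subseteq> V \<and> P S}"
    using assms(1) by (meson finite_Pow_iff finite_imageI finite_subset)
  show "y \<le> k" if "y \<in> {card S | S. S \<subseteq> V \<and> P S}" for y using that assms(5) by auto
  show "k \<in> {card S | S. S \<subseteq> V \<and> P S}" using assms(2-4) by auto
qed

lemma card_sub2: assumes "S \<subseteq> {a, b::nat}" shows "card S \<le> 2"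
proof -
  have "card S \<le> card {a, b}" by (rule card_mono) (auto simp: assms)
  also have "card {a, b} \<le> 2" by (simp add: card_insert_if)
  finally show ?thesis .
qed

lemma card_sub1: assumes "S \<subseteq> {a::nat}" shows "card S \<le> Suc 0"
proof -
  have "card S \<le> card {a}" by (rule card_mono) (auto simp: assms)
  then show ?thesis by simp
qed

lemma alpha_E2: "independence_number E2 = 2"
  unfolding independence_number_def
  by (rule Max_card_eq[where T="{0,1}"]) (auto simp: E2_def intro: card_sub2)

lemma alpha_K1: "independence_number K1 = 1"
  unfolding independence_number_def
  by (rule Max_card_eq[where T="{0}"]) (auto simp: K1_def intro: card_sub1)

lemma alpha_K2: "independence_number K2 = 1"
  unfolding independence_number_def
proof (rule Max_card_eq[where T="{0}"])
  fix S assume S: "S \<subseteq> verts K2" "\<forall>u\<in>S. \<forall>v\<in>S. (u, v) \<notin> edges K2"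
  have "finite S" using S(1) by (auto simp: K2_def intro: finite_subset)
  moreover have "\<forall>a1\<in>S. \<forall>a2\<in>S. a1 = a2" using S by (auto simp: K2_def)
  ultimately show "card S \<le> 1" using card_le_Suc0_iff_eq by auto
qed (auto simp: K2_def)

lemma omega_K1: "clique_number K1 = 1"
  unfolding clique_number_def
  by (rule Max_card_eq[where T="{0}"]) (auto simp: K1_def intro: card_sub1)

lemma omega_K2: "clique_number K2 = 2"
  unfolding clique_number_def
  by (rule Max_card_eq[where T="{0,1}"]) (auto simp: K2_def intro: card_sub2)

lemma omega_P3: "clique_number P3 = 2"
  unfolding clique_number_def
proof (rule Max_card_eq[where T="{0,1}"])
  fix S assume S: "S \<subseteq> verts P3" "\<forall>u\<in>S. \<forall>v\<in>S. u \<noteq> v \<longrightarrow> (u, v) \<in> edges P3"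
  have "\<not> (0 \<in> S \<and> 2 \<in> S)"
  proof
    assume "0 \<in> S \<and> 2 \<in> S"
    then have "(0, 2) \<in> edges P3" using S(2) by auto
    then show False by (simp add: P3_def)
  qed
  then have "S \<subseteq> {1,2} \<or> S \<subseteq> {0,1}" using S(1) by (auto simp: P3_def)
  then show "card S \<le> 2"
    using card_sub2 by blast
qed (auto simp: P3_def)

lemma chi_K1: "chromatic_number K1 = 1"
  unfolding chromatic_number_def
proof (rule Least_equality)
  show "\<exists>c\<in>verts K1 \<rightarrow> {..<1::nat}. \<forall>u v. (u, v) \<in> edges K1 \<longrightarrow> c u \<noteq> c v"
    by (rule bexI[where x="\<lambda>_. 0::nat"]) (auto simp: K1_def)
  fix y :: nat assume "\<exists>c\<in>verts K1 \<rightarrow> {..<y}. \<forall>u v. (u, v) \<in> edges K1 \<longrightarrow> c u \<noteq> c v"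
  then obtain c where "c \<in> verts K1 \<rightarrow> {..<y}" by blast
  then have "c 0 < y" by (auto simp: K1_def)
  then show "1 \<le> y" by simp
qed

lemma chi_K2: "chromatic_number K2 = 2"
  unfolding chromatic_number_def
proof (rule Least_equality)
  show "\<exists>c\<in>verts K2 \<rightarrow> {..<2::nat}. \<forall>u v. (u, v) \<in> edges K2 \<longrightarrow> c u \<noteq> c v"
    by (rule bexI[where x="\<lambda>x. x"]) (auto simp: K2_def)
  fix y :: nat assume "\<exists>c\<in>verts K2 \<rightarrow> {..<y}. \<forall>u v. (u, v) \<in> edges K2 \<longrightarrow> c u \<noteq> c v"
  then obtain c where c: "c \<in> verts K2 \<rightarrow> {..<y}" "c 0 \<noteq> c 1" by (auto simp: K2_def)
  then have "c 0 < y" "c 1 < y" by (auto simp: K2_def)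
  then show "2 \<le> y" using c(2) by linarith
qed

lemma chi_P3: "chromatic_number P3 = 2"
  unfolding chromatic_number_def
proof (rule Least_equality)
  show "\<exists>c\<in>verts P3 \<rightarrow> {..<2::nat}. \<forall>u v. (u, v) \<in> edges P3 \<longrightarrow> c u \<noteq> c v"
    by (rule bexI[where x="\<lambda>x. if x = 1 then 1 else 0"]) (auto simp: P3_def)
  fix y :: nat assume "\<exists>c\<in>verts P3 \<rightarrow> {..<y}. \<forall>u v. (u, v) \<in> edges P3 \<longrightarrow> c u \<noteq> c v"
  then obtain c where c: "c \<in> verts P3 \<rightarrow> {..<y}" "c 0 \<noteq> c 1" by (auto simp: P3_def)
  then have "c 0 < y" "c 1 < y" by (auto simp: P3_def)
  then show "2 \<le> y" using c(2) by linarith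
qed


lemma auts_K1: "auts K1 = {\<lambda>x. if x = 0 then 0 else undefined}"
proof
  show "auts K1 \<subseteq> {\<lambda>x. if x = 0 then 0 else undefined}"
  proof
    fix s assume "s \<in> auts K1"
    then have "s \<in> {0} \<rightarrow>\<^sub>E {0}" by (simp add: auts_def K1_def)
    then have "s = (\<lambda>x. if x = 0 then 0 else undefined)"
      by (auto simp: PiE_iff extensional_def fun_eq_iff)
    then show "s \<in> {\<lambda>x. if x = 0 then 0 else undefined}" by simp
  qed
  show "{\<lambda>x. if x = 0 then 0 else undefined} \<subseteq> auts K1"
    by (auto simp: auts_def K1_def bij_betw_def)
qed

lemma aut_K1: "aut_order K1 = 1"
  by (simp add: aut_order_def auts_K1)

definition f1 :: "nat \<Rightarrow> nat" where "f1 = (\<lambda>x. if x = 0 then 0 else if x = 1 then 1 else undefined)"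
definition f2 :: "nat \<Rightarrow> nat" where "f2 = (\<lambda>x. if x = 0 then 1 else if x = 1 then 0 else undefined)"

lemma auts_K2: "auts K2 = {f1, f2}"
proof
  show "auts K2 \<subseteq> {f1, f2}"
  proof
    fix s assume s: "s \<in> auts K2"
    then have A: "s \<in> {0,1} \<rightarrow>\<^sub>E {0,1}" and B: "inj_on s {0,1}" by (auto simp: auts_def K2_def bij_betw_def)
    then have v: "s 0 \<in> {0,1}" "s 1 \<in> {0,1}" "s 0 \<noteq> s 1" and e: "\<And>x. x \<noteq> 0 \<Longrightarrow> x \<noteq> 1 \<Longrightarrow> s x = undefined"
      by (auto simp: PiE_iff extensional_def inj_on_def)
    then have "s 0 = 0 \<and> s 1 = 1 \<or> s 0 = 1 \<and> s 1 = 0" by auto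
    then have "s = f1 \<or> s = f2" using e by (auto simp: fun_eq_iff f1_def f2_def)
    then show "s \<in> {f1, f2}" by simp
  qed
  show "{f1, f2} \<subseteq> auts K2"
    by (auto simp: auts_def K2_def bij_betw_def f1_def f2_def inj_on_def PiE_iff extensional_def)
qed

lemma aut_K2: "aut_order K2 = 2"
proof -
  have "f1 \<noteq> f2" by (auto simp: f1_def f2_def fun_eq_iff)
  then show ?thesis by (simp add: aut_order_def auts_K2)
qed

definition g1 :: "nat \<Rightarrow> nat" where "g1 = (\<lambda>x. if x = 0 then 0 else if x = 1 then 1 else if x = 2 then 2 else undefined)"
definition g2 :: "nat \<Rightarrow> nat" where "g2 = (\<lambda>x. if x = 0 then 2 else if x = 1 then 1 else if x = 2 then 0 else undefined)"

lemma auts_P3: "auts P3 = {g1, g2}"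
proof
  show "auts P3 \<subseteq> {g1, g2}"
  proof
    fix s assume s: "s \<in> auts P3"
    then have A: "s \<in> {0,1,2} \<rightarrow>\<^sub>E {0,1,2}" and B: "inj_on s {0,1,2}"
      and C: "\<forall>u\<in>{0,1,2}. \<forall>v\<in>{0,1,2}. (u, v) \<in> edges P3 \<longleftrightarrow> (s u, s v) \<in> edges P3"
      by (auto simp: auts_def P3_def bij_betw_def)
    have v: "s 0 \<in> {0,1,2}" "s 1 \<in> {0,1,2}" "s 2 \<in> {0,1,2}"
      using PiE_mem[OF A, of 0] PiE_mem[OF A, of 1] PiE_mem[OF A, of 2] by simp_all
    have i: "s 0 \<noteq> s 1" "s 0 \<noteq> s 2" "s 1 \<noteq> s 2"
      using inj_onD[OF B, of 0 1] inj_onD[OF B, of 0 2] inj_onD[OF B, of 1 2] by auto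
    have e: "\<And>x. x \<noteq> 0 \<Longrightarrow> x \<noteq> 1 \<Longrightarrow> x \<noteq> 2 \<Longrightarrow> s x = undefined"
      using A by (auto simp: PiE_iff extensional_def)
    have c1: "(s 0, s 1) \<in> edges P3" "(s 1, s 2) \<in> edges P3" "(s 0, s 2) \<notin> edges P3"
      using C by (auto simp: P3_def)
    have "s 0 = 0 \<and> s 1 = 1 \<and> s 2 = 2 \<or> s 0 = 2 \<and> s 1 = 1 \<and> s 2 = 0"
      using v i c1 by (auto simp: P3_def)
    then have "s = g1 \<or> s = g2" using e by (auto simp: fun_eq_iff g1_def g2_def)
    then show "s \<in> {g1, g2}" by simp
  qed
  show "{g1, g2} \<subseteq> auts P3"
    by (auto simp: auts_def P3_def bij_betw_def g1_def g2_def inj_on_def PiE_iff extensional_def)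
qed

lemma aut_P3: "aut_order P3 = 2"
proof -
  have "g1 \<noteq> g2" by (auto simp: g1_def g2_def fun_eq_iff)
  then show ?thesis by (simp add: aut_order_def auts_P3)
qed


lemma contra:
  assumes FF: "\<F> \<subseteq> {F. is_graph F}"
    and "\<not> hom_equiv \<F> K1 K2"
  shows "\<not> hom_equiv \<F> K2 P3"
proof -
  obtain F where "F \<in> \<F>" "hom F K1 \<noteq> hom F K2" using assms(2) by (auto simp: hom_equiv_def)
  moreover then have "is_graph F" using FF by auto
  ultimately show ?thesis using key1[of F] unfolding hom_equiv_def by blast
qed

lemma contra2:
  assumes FF: "\<F> \<subseteq> {F. is_graph F}"
    and "\<not> hom_equiv \<F> E2 K1"
  shows "\<not> hom_equiv \<F> K1 K2"
proof -
  obtain F where "F \<in> \<F>" "hom F E2 \<noteq> hom F K1" using assms(2) by (auto simp: hom_equiv_def)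
  moreover then have "is_graph F" using FF by auto
  ultimately show ?thesis using key2[of F] unfolding hom_equiv_def by blast
qed

theorem corollary20:
  shows "\<not> (\<exists>\<F>. \<F> \<subseteq> {F. is_graph F} \<and>
     ((\<forall>G H. is_graph G \<and> verts G \<noteq> {} \<and> is_graph H \<and> verts H \<noteq> {} \<longrightarrow>
         (hom_equiv \<F> G H \<longleftrightarrow> aut_order G = aut_order H))
    \<or> (\<forall>G H. is_graph G \<and> verts G \<noteq> {} \<and> is_graph H \<and> verts H \<noteq> {} \<longrightarrow>
         (hom_equiv \<F> G H \<longleftrightarrow> independence_number G = independence_number H))
    \<or> (\<forall>G H. is_graph G \<and> verts G \<noteq> {} \<and> is_graph H \<and> verts H \<noteq> {} \<longrightarrow>
         (hom_equiv \<F> G H \<longleftrightarrow> clique_number G = clique_number H))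
    \<or> (\<forall>G H. is_graph G \<and> verts G \<noteq> {} \<and> is_graph H \<and> verts H \<noteq> {} \<longrightarrow>
         (hom_equiv \<F> G H \<longleftrightarrow> chromatic_number G = chromatic_number H))))"
proof
  assume "\<exists>\<F>. \<F> \<subseteq> {F. is_graph F} \<and>
     ((\<forall>G H. is_graph G \<and> verts G \<noteq> {} \<and> is_graph H \<and> verts H \<noteq> {} \<longrightarrow>
         (hom_equiv \<F> G H \<longleftrightarrow> aut_order G = aut_order H))
    \<or> (\<forall>G H. is_graph G \<and> verts G \<noteq> {} \<and> is_graph H \<and> verts H \<noteq> {} \<longrightarrow>
         (hom_equiv \<F> G H \<longleftrightarrow> independence_number G = independence_number H))
    \<or> (\<forall>G H. is_graph G \<and> verts G \<noteq> {} \<and> is_graph H \<and> verts H \<noteq> {} \<longrightarrow>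
         (hom_equiv \<F> G H \<longleftrightarrow> clique_number G = clique_number H))
    \<or> (\<forall>G H. is_graph G \<and> verts G \<noteq> {} \<and> is_graph H \<and> verts H \<noteq> {} \<longrightarrow>
         (hom_equiv \<F> G H \<longleftrightarrow> chromatic_number G = chromatic_number H)))"
  then obtain \<F> where FF: "\<F> \<subseteq> {F. is_graph F}" and D:
     "(\<forall>G H. is_graph G \<and> verts G \<noteq> {} \<and> is_graph H \<and> verts H \<noteq> {} \<longrightarrow>
         (hom_equiv \<F> G H \<longleftrightarrow> aut_order G = aut_order H))
    \<or> (\<forall>G H. is_graph G \<and> verts G \<noteq> {} \<and> is_graph H \<and> verts H \<noteq> {} \<longrightarrow>
         (hom_equiv \<F> G H \<longleftrightarrow> independence_number G = independence_number H))
    \<or> (\<forall>G H. is_graph G \<and> verts G \<noteq> {} \<and> is_graph H \<and> verts H \<noteq> {} \<longrightarrow>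
         (hom_equiv \<F> G H \<longleftrightarrow> clique_number G = clique_number H))
    \<or> (\<forall>G H. is_graph G \<and> verts G \<noteq> {} \<and> is_graph H \<and> verts H \<noteq> {} \<longrightarrow>
         (hom_equiv \<F> G H \<longleftrightarrow> chromatic_number G = chromatic_number H))" by blast
  note g = graphs nonempty
  from D show False
  proof (elim disjE)
    assume A: "\<forall>G H. is_graph G \<and> verts G \<noteq> {} \<and> is_graph H \<and> verts H \<noteq> {} \<longrightarrow>
         (hom_equiv \<F> G H \<longleftrightarrow> aut_order G = aut_order H)"
    have "\<not> hom_equiv \<F> K1 K2" using A[rule_format, of K1 K2] g aut_K1 aut_K2 by simp
    moreover have "hom_equiv \<F> K2 P3" using A[rule_format, of K2 P3] g aut_P3 aut_K2 by simp
    ultimately show False using contra[OF FF] by blast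
  next
    assume A: "\<forall>G H. is_graph G \<and> verts G \<noteq> {} \<and> is_graph H \<and> verts H \<noteq> {} \<longrightarrow>
         (hom_equiv \<F> G H \<longleftrightarrow> independence_number G = independence_number H)"
    have "\<not> hom_equiv \<F> E2 K1" using A[rule_format, of E2 K1] g alpha_K1 alpha_E2 by simp
    moreover have "hom_equiv \<F> K1 K2" using A[rule_format, of K1 K2] g alpha_K1 alpha_K2 by simp
    ultimately show False using contra2[OF FF] by blast
  next
    assume A: "\<forall>G H. is_graph G \<and> verts G \<noteq> {} \<and> is_graph H \<and> verts H \<noteq> {} \<longrightarrow>
         (hom_equiv \<F> G H \<longleftrightarrow> clique_number G = clique_number H)"
    have "\<not> hom_equiv \<F> K1 K2" using A[rule_format, of K1 K2] g omega_K1 omega_K2 by simp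
    moreover have "hom_equiv \<F> K2 P3" using A[rule_format, of K2 P3] g omega_P3 omega_K2 by simp
    ultimately show False using contra[OF FF] by blast
  next
    assume A: "\<forall>G H. is_graph G \<and> verts G \<noteq> {} \<and> is_graph H \<and> verts H \<noteq> {} \<longrightarrow>
         (hom_equiv \<F> G H \<longleftrightarrow> chromatic_number G = chromatic_number H)"
    have "\<not> hom_equiv \<F> K1 K2" using A[rule_format, of K1 K2] g chi_K1 chi_K2 by simp
    moreover have "hom_equiv \<F> K2 P3" using A[rule_format, of K2 P3] g chi_P3 chi_K2 by simp
    ultimately show False using contra[OF FF] by blast
  qed
qed

end
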